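(* Let $\mu$ be a probability measure on $\mathbb{R}$ that is dimension regular: there exist a $\mu$-measurable function $\alpha(x)$ and strictly positive constants $C$, $c$, $t_0$ such that for every $x$ in the support of $\mu$ and all $0<t<t_0$, $$ct^{\alpha(x)}\le\mu[x-t/2,x+t/2]\le Ct^{\alpha(x)}.$$ Then $\delta_c(\mu)=\int\alpha(x)\,d\mu(x)$.
   Context: For $t>0$, $\nu_t$ is the centered Gaussian law on $\mathbb{R}$ with variance $t^2$, $\mu_t=\mu*\nu_t$, and $H(p\,dx)=\int p\log p\,dx$. Define $$\delta_c(\mu)=1-\liminf_{t\to0}\frac{H(\mu_t)}{|\log t|}.$$ *)

theory Defs
  imports "HOL-Probability.Probability"
begin

text \<open>Density of mu_t = mu * nu_t, where nu_t is the centred Gaussian with variance t^2.\<close>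
definition gauss_smooth_density :: "real measure \<Rightarrow> real \<Rightarrow> real \<Rightarrow> real" where
  "gauss_smooth_density \<mu> t x = (\<integral>y. normal_density 0 t (x - y) \<partial>\<mu>)"

text \<open>Differential entropy H(p dx) = integral of p log p dx, taken in the extended reals
  as (positive part) minus (negative part), so that the value minus infinity is allowed.\<close>
definition diff_entropy :: "(real \<Rightarrow> real) \<Rightarrow> ereal" where
  "diff_entropy p =
     enn2ereal (\<integral>\<^sup>+ x. ennreal (max 0 (p x * ln (p x))) \<partial>lborel)
   - enn2ereal (\<integral>\<^sup>+ x. ennreal (max 0 (- (p x * ln (p x)))) \<partial>lborel)"

definition delta_c :: "real measure \<Rightarrow> ereal" where
  "delta_c \<mu> = 1 - Liminf (at_right 0)
      (\<lambda>t. diff_entropy (gauss_smooth_density \<mu> t) / ereal \<bar>ln t\<bar>)"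

definition measure_support :: "real measure \<Rightarrow> real set" where
  "measure_support \<mu> = {x. \<forall>e>0. emeasure \<mu> (ball x e) > 0}"

end

theory Submission imports Defs "HOL-Real_Asymp.Real_Asymp" begin

lemma nd_shift: "normal_density 0 t (x - y) = normal_density y t x"
  by (simp add: normal_density_def)

lemma nd_quad:
  assumes t: "0 < t"
  shows "integrable lborel (\<lambda>x. normal_density y t x * (a + b * ((x - y)/t)\<^sup>2))"
    and "(\<integral>x. normal_density y t x * (a + b * ((x - y)/t)\<^sup>2) \<partial>lborel) = a + b"
proof -
  have eq: "(\<lambda>x. normal_density y t x * (a + b * ((x - y)/t)\<^sup>2)) =
      (\<lambda>x. a * normal_density y t x + (b / t\<^sup>2) * (normal_density y t x * (x - y) ^ 2))"
    using t by (auto simp: fun_eq_iff field_simps power_divide)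
  have i1: "integrable lborel (\<lambda>x. normal_density y t x * (x - y) ^ 2)"
    using integrable_normal_moment[OF t, of y 2] by simp
  show "integrable lborel (\<lambda>x. normal_density y t x * (a + b * ((x - y)/t)\<^sup>2))"
    unfolding eq by (intro Bochner_Integration.integrable_add integrable_mult_right integrable_normal_density[OF t] i1)
  have m2: "(\<integral>x. normal_density y t x * (x - y) ^ 2 \<partial>lborel) = t\<^sup>2"
    using integral_normal_moment_even[OF t, of y 1] by (simp add: power2_eq_square)
  show "(\<integral>x. normal_density y t x * (a + b * ((x - y)/t)\<^sup>2) \<partial>lborel) = a + b"
    unfolding eq using i1 t by (simp add: m2)
qed

lemma de_int:
  assumes "integrable lborel (\<lambda>x. p x * ln (p x))"
  shows "diff_entropy p = ereal (\<integral>x. p x * ln (p x) \<partial>lborel)"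
proof -
  define f where "f x = p x * ln (p x)" for x
  have fi: "integrable lborel f" unfolding f_def[abs_def] by (rule assms)
  define A where "A = (\<integral>\<^sup>+ x. ennreal (f x) \<partial>lborel)"
  define B where "B = (\<integral>\<^sup>+ x. ennreal (- f x) \<partial>lborel)"
  have bnd: "(\<integral>\<^sup>+ x. ennreal (norm (f x)) \<partial>lborel) < \<infinity>" using fi by (simp add: integrable_iff_bounded)
  have "A \<le> (\<integral>\<^sup>+ x. ennreal (norm (f x)) \<partial>lborel)" unfolding A_def
    by (intro nn_integral_mono) (auto intro: ennreal_leI)
  then have Af: "A \<noteq> \<infinity>" using bnd by (auto simp: top_unique)
  have "B \<le> (\<integral>\<^sup>+ x. ennreal (norm (f x)) \<partial>lborel)" unfolding B_def
    by (intro nn_integral_mono) (auto intro: ennreal_leI)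
  then have Bf: "B \<noteq> \<infinity>" using bnd by (auto simp: top_unique)
  have eA: "enn2ereal A = ereal (enn2real A)"
  proof -
    have "ennreal (enn2real A) = A" using Af by (intro ennreal_enn2real) (simp add: less_top)
    then have "enn2ereal A = enn2ereal (ennreal (enn2real A))" by simp
    also have "\<dots> = ereal (enn2real A)" by (rule enn2ereal_ennreal[OF enn2real_nonneg])
    finally show ?thesis .
  qed
  have eB: "enn2ereal B = ereal (enn2real B)"
  proof -
    have "ennreal (enn2real B) = B" using Bf by (intro ennreal_enn2real) (simp add: less_top)
    then have "enn2ereal B = enn2ereal (ennreal (enn2real B))" by simp
    also have "\<dots> = ereal (enn2real B)" by (rule enn2ereal_ennreal[OF enn2real_nonneg])
    finally show ?thesis .
  qed
  have "diff_entropy p = enn2ereal A - enn2ereal B"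
    unfolding diff_entropy_def A_def B_def f_def ennreal_max_0 ..
  also have "\<dots> = ereal (enn2real A - enn2real B)" using eA eB by simp
  also have "enn2real A - enn2real B = (\<integral>x. f x \<partial>lborel)"
    using real_lebesgue_integral_def[OF fi] by (simp add: A_def B_def)
  finally show ?thesis by (simp add: f_def)
qed

lemma lim0: "filterlim (\<lambda>t::real. - ln t) at_top (at_right 0)"
  by real_asymp
lemma limb: "((\<lambda>t::real. ln (2 + 2 * sqrt (2 * - ln t)) / (- ln t)) \<longlongrightarrow> 0) (at_right 0)"
  by real_asymp
lemma lim1: "((\<lambda>t::real. k / (- ln t)) \<longlongrightarrow> 0) (at_right 0)"
  by (rule tendsto_divide_0[OF tendsto_const filterlim_at_top_imp_at_infinity[OF lim0]])
lemma lim2: "((\<lambda>t::real. (k + ln (2 + 2 * sqrt (2 * - ln t))) / (- ln t)) \<longlongrightarrow> 0) (at_right 0)"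
  using tendsto_add[OF lim1[of k] limb] by (simp add: add_divide_distrib)

locale dimreg =
  fixes M :: "real measure" and \<alpha> :: "real \<Rightarrow> real" and C c t0 :: real
  assumes P: "prob_space M" and SB: "sets M = sets borel"
    and AM: "\<alpha> \<in> borel_measurable M"
    and Cp: "C > 0" and cp: "c > 0" and t0p: "t0 > 0"
    and REG: "\<And>x t. x \<in> measure_support M \<Longrightarrow> 0 < t \<Longrightarrow> t < t0 \<Longrightarrow>
           c * t powr \<alpha> x \<le> measure M {x - t/2 .. x + t/2}
         \<and> measure M {x - t/2 .. x + t/2} \<le> C * t powr \<alpha> x"
begin

abbreviation "S \<equiv> measure_support M"

lemma sets_M[measurable_cong]: "sets M = sets borel" by (rule SB)

lemma space_M[simp]: "space M = UNIV"
  using sets_eq_imp_space_eq[OF SB] by simp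

lemma borel_in_M[intro]: "A \<in> sets borel \<Longrightarrow> A \<in> sets M"
  using SB by simp

lemma S_closed: "closed S"
proof -
  have "open (- S)"
  proof (rule openI)
    fix x assume "x \<in> - S"
    then obtain e where e: "e > 0" "emeasure M (ball x e) = 0"
      unfolding measure_support_def by (auto simp: not_less)
    have "ball x (e/2) \<subseteq> - S"
    proof
      fix z assume z: "z \<in> ball x (e/2)"
      have "ball z (e/2) \<subseteq> ball x e"
      proof
        fix w assume "w \<in> ball z (e/2)"
        then have "dist x w < e" using z dist_triangle[of x w z] by simp
        then show "w \<in> ball x e" by simp
      qed
      then have "emeasure M (ball z (e/2)) \<le> emeasure M (ball x e)"
        by (intro emeasure_mono) auto
      then have "emeasure M (ball z (e/2)) = 0" using e by simp
      then show "z \<in> - S" using e unfolding measure_support_def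
        by (auto intro!: exI[of _ "e/2"])
    qed
    then show "\<exists>e>0. ball x e \<subseteq> - S" using e by (intro exI[of _ "e/2"]) auto
  qed
  then show ?thesis by (simp add: closed_def)
qed

lemma S_sets[measurable]: "S \<in> sets M"
  using S_closed by (auto intro: borel_closed)

lemma AE_S: "AE x in M. x \<in> S"
proof -
  define I where "I = {(a,b). a \<in> \<rat> \<and> b \<in> \<rat> \<and> emeasure M {a<..<b} = 0}"
  have cI: "countable I"
  proof -
    have "I \<subseteq> \<rat> \<times> \<rat>" by (auto simp: I_def)
    moreover have "countable (\<rat> \<times> (\<rat>::real set))" by (intro countable_SIGMA countable_rat)
    ultimately show ?thesis using countable_subset by blast
  qed
  have N: "(\<Union>p\<in>I. {fst p<..<snd p}) \<in> null_sets M"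
    by (rule null_sets_UN'[OF cI]) (auto simp: I_def null_sets_def)
  have "{x \<in> space M. \<not> x \<in> S} \<subseteq> (\<Union>p\<in>I. {fst p<..<snd p})"
  proof
    fix x assume "x \<in> {x \<in> space M. \<not> x \<in> S}"
    then obtain e where e: "e > 0" "emeasure M (ball x e) = 0"
      unfolding measure_support_def by (auto simp: not_less)
    obtain a where a: "a \<in> \<rat>" "x - e < a" "a < x" using Rats_dense_in_real[of "x - e" x] e by auto
    obtain b where b: "b \<in> \<rat>" "x < b" "b < x + e" using Rats_dense_in_real[of x "x + e"] e by auto
    have "{a<..<b} \<subseteq> ball x e" using a b by (auto simp: ball_def dist_real_def)
    then have "emeasure M {a<..<b} \<le> emeasure M (ball x e)" by (intro emeasure_mono) auto
    then have "(a,b) \<in> I" using a b e by (auto simp: I_def)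
    then show "x \<in> (\<Union>p\<in>I. {fst p<..<snd p})" using a b by force
  qed
  then show ?thesis by (rule AE_I'[OF N])
qed

lemma measure_le1: "measure M A \<le> 1"
  using prob_space.prob_le_1[OF P] by simp

lemma alpha_nonneg: assumes "x \<in> S" shows "0 \<le> \<alpha> x"
proof (rule ccontr)
  assume "\<not> 0 \<le> \<alpha> x"
  then have an: "\<alpha> x < 0" by simp
  define t where "t = min (t0/2) (exp (ln c / (- \<alpha> x)) / 2)"
  have tp: "0 < t" "t < t0" using t0p by (auto simp: t_def)
  have "ln t \<le> ln (exp (ln c / (- \<alpha> x)) / 2)" using tp by (auto simp: t_def)
  also have "\<dots> < ln c / (- \<alpha> x)" by (simp add: ln_div)
  finally have "ln t < ln c / (- \<alpha> x)" .
  then have "ln t * (- \<alpha> x) < (ln c / (- \<alpha> x)) * (- \<alpha> x)"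
    using an by (intro mult_strict_right_mono) auto
  then have "ln t * (- \<alpha> x) < ln c" using an by simp
  then have "0 < ln c + \<alpha> x * ln t" by (simp add: algebra_simps)
  then have "1 < exp (ln c + \<alpha> x * ln t)" by simp
  also have "exp (ln c + \<alpha> x * ln t) = c * t powr \<alpha> x"
    using cp tp by (simp add: exp_add powr_def)
  also have "\<dots> \<le> measure M {x - t/2 .. x + t/2}" using REG[OF assms tp] by simp
  also have "\<dots> \<le> 1" by (rule measure_le1)
  finally show False by simp
qed

definition "Eset \<epsilon> R = {x\<in>S. 1 + \<epsilon> \<le> \<alpha> x \<and> \<bar>x\<bar> \<le> R}"

lemma Eset_sets[measurable]: "Eset \<epsilon> R \<in> sets M"
proof -
  have "Eset \<epsilon> R = S \<inter> {x \<in> space M. 1 + \<epsilon> \<le> \<alpha> x} \<inter> {x\<in>space M. \<bar>x\<bar> \<le> R}"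
    by (auto simp: Eset_def)
  also have "\<dots> \<in> sets M" using AM by measurable
  finally show ?thesis .
qed

lemma piece_bound:
  assumes "0 < t" "t < t0" "t \<le> 1" "\<epsilon> > 0"
  shows "measure M (Eset \<epsilon> R \<inter> {a .. a + t/2}) \<le> C * t powr (1+\<epsilon>)"
proof (cases "Eset \<epsilon> R \<inter> {a .. a + t/2} = {}")
  case True then show ?thesis using Cp by simp
next
  case False
  then obtain x where x: "x \<in> Eset \<epsilon> R" "a \<le> x" "x \<le> a + t/2" by auto
  have "Eset \<epsilon> R \<inter> {a .. a + t/2} \<subseteq> {x - t/2 .. x + t/2}" using x by auto
  then have "measure M (Eset \<epsilon> R \<inter> {a .. a + t/2}) \<le> measure M {x - t/2 .. x + t/2}"
    by (intro finite_measure.finite_measure_mono[OF prob_space.finite_measure[OF P]]) auto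
  also have "\<dots> \<le> C * t powr \<alpha> x" using REG[of x t] x assms by (auto simp: Eset_def)
  also have "\<dots> \<le> C * t powr (1+\<epsilon>)"
    using x assms Cp by (intro mult_left_mono powr_mono') (auto simp: Eset_def)
  finally show ?thesis .
qed

lemma grid_bound:
  assumes "0 < t" "t < t0" "t \<le> 1" "\<epsilon> > 0" "R > 0"
  shows "measure M (Eset \<epsilon> R) \<le> (4*R/t + 3) * (C * t powr (1+\<epsilon>))"
proof -
  define N where "N = \<lceil>2*R/t\<rceil>"
  define J where "J k = Eset \<epsilon> R \<inter> {real_of_int k * t/2 .. real_of_int k * t/2 + t/2}" for k :: int
  have cover: "Eset \<epsilon> R \<subseteq> (\<Union>k\<in>{-N..N}. J k)"
  proof
    fix x assume x: "x \<in> Eset \<epsilon> R"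
    define k where "k = \<lfloor>2*x/t\<rfloor>"
    have k1: "real_of_int k \<le> 2*x/t" "2*x/t < real_of_int k + 1" unfolding k_def by linarith+
    have "real_of_int k * t \<le> 2 * x" using k1(1) assms by (simp add: pos_le_divide_eq)
    moreover have "2 * x < (real_of_int k + 1) * t" using k1(2) assms by (simp add: pos_divide_less_eq)
    ultimately have xin: "real_of_int k * t/2 \<le> x" "x \<le> real_of_int k * t/2 + t/2"
      by (auto simp: algebra_simps)
    have xr: "\<bar>x\<bar> \<le> R" using x by (auto simp: Eset_def)
    have "2*x/t \<le> 2*R/t" using xr assms by (intro divide_right_mono) auto
    then have "k \<le> N" unfolding k_def N_def by (meson floor_le_ceiling order_trans floor_mono)
    moreover have "-2*R/t \<le> 2*x/t" using xr assms by (intro divide_right_mono) auto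
    then have "\<lfloor>-2*R/t\<rfloor> \<le> k" unfolding k_def by (rule floor_mono)
    then have "-N \<le> k" unfolding N_def using ceiling_def by (simp add: ceiling_def)
    ultimately show "x \<in> (\<Union>k\<in>{-N..N}. J k)" using x xin by (auto simp: J_def)
  qed
  have "measure M (Eset \<epsilon> R) \<le> measure M (\<Union>k\<in>{-N..N}. J k)"
    using cover by (intro finite_measure.finite_measure_mono[OF prob_space.finite_measure[OF P]])
      (auto simp: J_def)
  also have "\<dots> \<le> (\<Sum>k\<in>{-N..N}. measure M (J k))"
    by (rule measure_UNION_le) (auto simp: J_def)
  also have "\<dots> \<le> (\<Sum>k\<in>{-N..N}. C * t powr (1+\<epsilon>))"
    unfolding J_def using assms by (intro sum_mono piece_bound) auto
  also have "\<dots> = real (card {-N..N}) * (C * t powr (1+\<epsilon>))" by simp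
  also have "\<dots> \<le> (4*R/t + 3) * (C * t powr (1+\<epsilon>))"
  proof (intro mult_right_mono)
    have "0 < 2*R/t" using assms by simp
    then have "N \<ge> 0" unfolding N_def by linarith
    then have "real (card {-N..N}) = 2 * real_of_int N + 1" by simp
    also have "real_of_int N \<le> 2*R/t + 1" unfolding N_def by linarith
    then have "2 * real_of_int N + 1 \<le> 4*R/t + 3" by simp
    finally show "real (card {-N..N}) \<le> 4*R/t + 3" .
    show "0 \<le> C * t powr (1+\<epsilon>)" using Cp by simp
  qed
  finally show ?thesis .
qed

lemma Eset_null:
  assumes "\<epsilon> > 0" "R > 0"
  shows "Eset \<epsilon> R \<in> null_sets M"
proof -
  have lim: "((\<lambda>t. (4*R/t + 3) * (C * t powr (1+\<epsilon>))) \<longlongrightarrow> 0) (at_right 0)"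
    using assms by real_asymp
  have ev: "eventually (\<lambda>t. measure M (Eset \<epsilon> R) \<le> (4*R/t + 3) * (C * t powr (1+\<epsilon>))) (at_right 0)"
  proof -
    have "eventually (\<lambda>t. t < min t0 1) (at_right (0::real))"
      using t0p by (intro order_tendstoD(2)[OF tendsto_ident_at]) auto
    moreover have "eventually (\<lambda>t. 0 < t) (at_right (0::real))" by (rule eventually_at_right_less)
    ultimately show ?thesis
      by eventually_elim (rule grid_bound, use assms in auto)
  qed
  have "measure M (Eset \<epsilon> R) \<le> 0"
    by (rule tendsto_lowerbound[OF lim ev]) simp
  then have "measure M (Eset \<epsilon> R) = 0" by (simp add: measure_nonneg antisym)
  then show ?thesis
    using finite_measure.emeasure_eq_measure[OF prob_space.finite_measure[OF P]] by (simp add: null_sets_def)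
qed

lemma AE_alpha_le1: "AE x in M. \<alpha> x \<le> 1"
proof -
  define N where "N = (\<Union>p\<in>(UNIV::(nat\<times>nat) set). Eset (1 / real (Suc (fst p))) (real (Suc (snd p))))"
  have N0: "N \<in> null_sets M" unfolding N_def
    by (rule null_sets_UN') (auto intro!: Eset_null)
  have "AE x in M. x \<in> S \<longrightarrow> \<alpha> x \<le> 1"
  proof (rule AE_I'[OF N0], rule subsetI)
    fix x assume "x \<in> {x \<in> space M. \<not> (x \<in> S \<longrightarrow> \<alpha> x \<le> 1)}"
    then have x: "x \<in> S" "\<not> \<alpha> x \<le> 1" by auto
    obtain n0 where n0: "n0 > 0" "inverse (real n0) < \<alpha> x - 1" using x ex_inverse_of_nat_less[of "\<alpha> x - 1"] by auto
    define n where "n = n0 - 1"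
    have n: "inverse (real (Suc n)) < \<alpha> x - 1" using n0 by (simp add: n_def)
    obtain m where m: "\<bar>x\<bar> \<le> real m" using real_arch_simple by blast
    have "x \<in> Eset (1 / real (Suc n)) (real (Suc m))"
      using x n m by (auto simp: Eset_def inverse_eq_divide)
    then show "x \<in> N" unfolding N_def by (intro UN_I[of "(n,m)"]) auto
  qed
  with AE_S show ?thesis by eventually_elim auto
qed

lemma alpha_integrable: "integrable M \<alpha>"
proof (rule finite_measure.integrable_const_bound[OF prob_space.finite_measure[OF P], where B=1])
  show "AE x in M. norm (\<alpha> x) \<le> 1"
    using AE_S AE_alpha_le1 by eventually_elim (use alpha_nonneg in auto)
qed (rule AM)

lemma AE_good: "AE y in M. y \<in> S \<and> 0 \<le> \<alpha> y \<and> \<alpha> y \<le> 1"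
  using AE_S AE_alpha_le1 by eventually_elim (use alpha_nonneg in auto)

lemma FM: "finite_measure M" by (rule prob_space.finite_measure[OF P])

lemma S_ne: "S \<noteq> {}"
proof
  assume "S = {}"
  with AE_S have "AE x in M. False" by simp
  then obtain N where N: "{x \<in> space M. \<not> False} \<subseteq> N" "emeasure M N = 0" "N \<in> sets M"
    by (rule AE_E)
  then have "emeasure M (space M) \<le> emeasure M N" by (intro emeasure_mono) auto
  then show False using N prob_space.emeasure_space_1[OF P] by simp
qed

lemma nd_le: "normal_density m t x \<le> 1 / sqrt (2 * pi * t\<^sup>2)"
  unfolding normal_density_def by (intro mult_left_le) auto

lemma nd_mono: assumes "\<bar>u\<bar> \<le> v" shows "normal_density 0 t v \<le> normal_density 0 t u"
proof -
  have "u\<^sup>2 \<le> v\<^sup>2" using assms by (metis abs_ge_zero order.trans power2_abs power_mono)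
  then have "- v\<^sup>2 / (2 * t\<^sup>2) \<le> - u\<^sup>2 / (2 * t\<^sup>2)" by (intro divide_right_mono) auto
  then show ?thesis unfolding normal_density_def by (intro mult_left_mono) auto
qed

lemma nd_meas[measurable]: "(\<lambda>y. normal_density 0 t (x - y)) \<in> borel_measurable M"
  by measurable

lemma nd_int: "integrable M (\<lambda>y. normal_density 0 t (x - y))"
  by (rule finite_measure.integrable_const_bound[OF FM, where B="1 / sqrt (2 * pi * t\<^sup>2)"])
     (auto simp: nd_le)

lemma ind_int: "A \<in> sets M \<Longrightarrow> integrable M (\<lambda>z. indicator A z * (k::real))"
  by (rule finite_measure.integrable_const_bound[OF FM, where B="\<bar>k\<bar>"]) (auto simp: indicator_def)

lemma const_int[simp, intro]: "integrable M (\<lambda>z. (k::real))"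
  by (rule finite_measure.integrable_const_bound[OF FM, where B="\<bar>k\<bar>"]) auto

lemma ind_int1: "A \<in> sets M \<Longrightarrow> integrable M (indicator A :: real \<Rightarrow> real)"
  by (rule finite_measure.integrable_const_bound[OF FM, where B="1"]) (auto simp: indicator_def)

lemma int_ind: "A \<in> sets M \<Longrightarrow> (\<integral>z. indicator A z * (k::real) \<partial>M) = measure M A * k"
  using finite_measure.emeasure_eq_measure[OF FM] by simp

lemma p_lower:
  assumes y: "y \<in> S" and t: "0 < t" "t < t0"
  shows "c * t powr \<alpha> y * normal_density 0 t (\<bar>x - y\<bar> + t/2) \<le> gauss_smooth_density M t x"
proof -
  let ?I = "{y - t/2 .. y + t/2}"
  let ?L = "normal_density 0 t (\<bar>x - y\<bar> + t/2)"
  have pw: "indicator ?I z * ?L \<le> normal_density 0 t (x - z)" for z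
  proof (cases "z \<in> ?I")
    case True
    then have "\<bar>x - z\<bar> \<le> \<bar>x - y\<bar> + t/2" by auto
    then show ?thesis using True by (simp add: nd_mono)
  qed simp
  have "c * t powr \<alpha> y * ?L \<le> measure M ?I * ?L"
    using REG[OF y t] by (intro mult_right_mono) auto
  also have "\<dots> = (\<integral>z. indicator ?I z * ?L \<partial>M)" by (subst int_ind) auto
  also have "\<dots> \<le> (\<integral>z. normal_density 0 t (x - z) \<partial>M)"
    by (intro integral_mono ind_int nd_int pw) auto
  finally show ?thesis by (simp add: gauss_smooth_density_def)
qed

lemma p_pos: assumes "0 < t" "t < t0" shows "0 < gauss_smooth_density M t x"
proof -
  obtain y where y: "y \<in> S" using S_ne by auto
  have "0 < c * t powr \<alpha> y * normal_density 0 t (\<bar>x - y\<bar> + t/2)"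
    using cp assms by (auto intro!: mult_pos_pos normal_density_pos)
  then show ?thesis using p_lower[OF y assms, where x=x] by linarith
qed

lemma mass_upper:
  assumes y: "y \<in> S" "0 \<le> \<alpha> y" "\<alpha> y \<le> 1" and t: "0 < t" "t \<le> 1" and w: "0 < w"
  shows "measure M {y - w/2 .. y + w/2} \<le> max C (1/t0) * t powr \<alpha> y * (1 + w/t)"
proof (cases "w < t0")
  case True
  have "measure M {y - w/2 .. y + w/2} \<le> C * w powr \<alpha> y" using REG[OF y(1) w True] by simp
  also have "w powr \<alpha> y = t powr \<alpha> y * (w/t) powr \<alpha> y"
    using t w by (simp add: powr_divide)
  also have "(w/t) powr \<alpha> y \<le> 1 + w/t"
  proof (cases "1 \<le> w/t")
    case True
    then have "(w/t) powr \<alpha> y \<le> (w/t) powr 1" using y by (intro powr_mono) auto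
    then show ?thesis using t w by simp
  next
    case False
    then have "(w/t) powr \<alpha> y \<le> 1" using y t w by (intro powr_le1) auto
    then show ?thesis using t w by (smt (verit) divide_nonneg_nonneg)
  qed
  then have "C * (t powr \<alpha> y * (w/t) powr \<alpha> y) \<le> max C (1/t0) * (t powr \<alpha> y * (1 + w/t))"
    using Cp by (intro mult_mono) auto
  finally show ?thesis by (simp add: mult.assoc)
next
  case False
  have "t powr 1 \<le> t powr \<alpha> y" using y t by (intro powr_mono') auto
  then have tt: "t \<le> t powr \<alpha> y" using t by simp
  have "1 \<le> (1/t0) * (t + w)" using False t0p t by (simp add: field_simps)
  also have "t + w = t * (1 + w/t)" using t by (simp add: field_simps)
  also have "(1/t0) * (t * (1 + w/t)) \<le> max C (1/t0) * (t powr \<alpha> y * (1 + w/t))"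
    using tt t w t0p Cp by (intro mult_mono) auto
  finally show ?thesis using measure_le1[of "{y - w/2 .. y + w/2}"] by (simp add: mult.assoc)
qed

definition "Mx = max (max C (1/t0)) 1"

lemma Mx_ge: "1 \<le> Mx" "max C (1/t0) \<le> Mx" by (auto simp: Mx_def)

lemma sqrt_t: "0 < t \<Longrightarrow> sqrt (2 * pi * t\<^sup>2) = t * sqrt (2 * pi)"
  by (simp add: real_sqrt_mult)

lemma p_upper:
  assumes y: "y \<in> S" "0 \<le> \<alpha> y" "\<alpha> y \<le> 1" and t: "0 < t" "t < 1"
  shows "gauss_smooth_density M t x \<le>
    Mx * t powr \<alpha> y / (t * sqrt (2*pi)) * (2 + 2 * sqrt (2 * - ln t) + 2 * (\<bar>x - y\<bar> / t))"
proof -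
  define L where "L = - ln t"
  have L: "0 < L" using t by (simp add: L_def)
  define r where "r = t * sqrt (2 * L)"
  have r: "0 < r" using t L by (simp add: r_def)
  define A where "A = 1 / (t * sqrt (2*pi))"
  have A: "0 < A" using t by (simp add: A_def)
  let ?I = "{x - r .. x + r}"
  have pw: "normal_density 0 t (x - z) \<le> indicator ?I z * A + A * t" for z
  proof (cases "z \<in> ?I")
    case True
    have "normal_density 0 t (x - z) \<le> A" using nd_le[of 0 t "x - z"] t by (simp add: A_def sqrt_t)
    moreover have "0 < A * t" using A t by simp
    ultimately show ?thesis using True by simp
  next
    case False
    then have "r < \<bar>x - z\<bar>" by auto
    then have "r\<^sup>2 \<le> (x - z)\<^sup>2" using r
      by (metis abs_ge_zero less_imp_le power2_abs power_mono)
    moreover have "r\<^sup>2 = 2 * L * t\<^sup>2" using L t by (simp add: r_def power_mult_distrib)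
    ultimately have "L \<le> (x - z)\<^sup>2 / (2 * t\<^sup>2)" using t by (simp add: field_simps)
    then have "exp (- (x - z)\<^sup>2 / (2 * t\<^sup>2)) \<le> exp (- L)" by simp
    also have "exp (- L) = t" using t by (simp add: L_def)
    finally have e: "exp (- (x - z)\<^sup>2 / (2 * t\<^sup>2)) \<le> t" .
    have "exp (- (x - z)\<^sup>2 / (2 * t\<^sup>2)) / (t * sqrt (2 * pi)) \<le> t / (t * sqrt (2 * pi))"
      using e t by (intro divide_right_mono) auto
    then have "normal_density 0 t (x - z) \<le> A * t"
      unfolding normal_density_def A_def using t by (simp add: sqrt_t)
    then show ?thesis using False by simp
  qed
  have "gauss_smooth_density M t x \<le> (\<integral>z. indicator ?I z * A + A * t \<partial>M)"
    unfolding gauss_smooth_density_def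
    by (intro integral_mono nd_int pw Bochner_Integration.integrable_add ind_int) auto
  also have "\<dots> = measure M ?I * A + A * t"
    using prob_space.prob_space[OF P]
    by (subst Bochner_Integration.integral_add) (auto intro!: ind_int ind_int1 simp: int_ind prob_space.prob_space)
  also have "measure M ?I \<le> measure M {y - (2 * (r + \<bar>x - y\<bar>))/2 .. y + (2 * (r + \<bar>x - y\<bar>))/2}"
    by (intro finite_measure.finite_measure_mono[OF FM]) (auto simp: abs_if field_simps)
  also have "\<dots> \<le> max C (1/t0) * t powr \<alpha> y * (1 + (2 * (r + \<bar>x - y\<bar>)) / t)"
    using y t r by (intro mass_upper) (auto intro: add_pos_nonneg)
  also have "\<dots> \<le> Mx * t powr \<alpha> y * (1 + (2 * (r + \<bar>x - y\<bar>)) / t)"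
    using Mx_ge t r by (intro mult_right_mono) auto
  also have "A * t \<le> A * (Mx * t powr \<alpha> y)"
  proof -
    have "t powr 1 \<le> t powr \<alpha> y" using y t by (intro powr_mono') auto
    then have "t \<le> t powr \<alpha> y" using t by simp
    also have "\<dots> \<le> Mx * t powr \<alpha> y" using Mx_ge mult_right_mono[of 1 Mx "t powr \<alpha> y"] by simp
    finally show ?thesis using A by simp
  qed
  finally have "gauss_smooth_density M t x \<le> A * (Mx * t powr \<alpha> y) * (2 + (2 * (r + \<bar>x - y\<bar>)) / t)"
    using A by (simp add: algebra_simps)
  also have "(2 + (2 * (r + \<bar>x - y\<bar>)) / t) = 2 + 2 * sqrt (2 * - ln t) + 2 * (\<bar>x - y\<bar> / t)"
    using t by (simp add: r_def L_def field_simps)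
  finally show ?thesis by (simp add: A_def)
qed

definition "K1 = ln c - ln (sqrt (2*pi)) - 1/4"
definition "K2 t = ln (Mx / sqrt (2*pi)) + ln (2 + 2 * sqrt (2 * - ln t)) + 1/2"

lemma log_lower:
  assumes y: "y \<in> S" and t: "0 < t" "t < t0"
  shows "K1 + (\<alpha> y - 1) * ln t - ((x - y)/t)\<^sup>2 \<le> ln (gauss_smooth_density M t x)"
proof -
  define v where "v = \<bar>x - y\<bar> + t/2"
  have nd: "normal_density 0 t v = exp (- v\<^sup>2 / (2 * t\<^sup>2)) / (t * sqrt (2*pi))"
    using t by (simp add: normal_density_def sqrt_t)
  have ndp: "0 < normal_density 0 t v" using t by (simp add: normal_density_pos)
  have tp: "0 < t powr \<alpha> y" using t by simp
  have "ln (c * t powr \<alpha> y * normal_density 0 t v) \<le> ln (gauss_smooth_density M t x)"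
    using p_lower[OF y t, where x=x] p_pos[OF t, where x=x] cp tp ndp by (subst ln_le_cancel_iff) (auto simp: v_def)
  moreover have "ln (c * t powr \<alpha> y * normal_density 0 t v) =
      ln c + \<alpha> y * ln t - ln t - ln (sqrt (2*pi)) - v\<^sup>2 / (2 * t\<^sup>2)"
    using cp tp ndp t by (simp add: ln_mult nd ln_div ln_powr)
  moreover have "v\<^sup>2 / (2 * t\<^sup>2) \<le> ((x - y)/t)\<^sup>2 + 1/4"
  proof -
    have "\<bar>x - y\<bar> * t \<le> (x - y)\<^sup>2 + t\<^sup>2/4"
      using sum_squares_ge_zero[of "\<bar>x - y\<bar> - t/2" 0]
      by (simp add: power2_eq_square algebra_simps abs_mult_self_eq)
    then have "v\<^sup>2 \<le> 2 * (x - y)\<^sup>2 + t\<^sup>2/2"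
      by (simp add: v_def power2_eq_square algebra_simps abs_mult_self_eq)
    then have "v\<^sup>2 / (2 * t\<^sup>2) \<le> (2 * (x - y)\<^sup>2 + t\<^sup>2/2) / (2 * t\<^sup>2)"
      using t by (intro divide_right_mono) auto
    also have "\<dots> = ((x - y)/t)\<^sup>2 + 1/4" using t by (simp add: field_simps power2_eq_square)
    finally show ?thesis .
  qed
  ultimately show ?thesis by (simp add: K1_def algebra_simps)
qed

lemma log_upper:
  assumes y: "y \<in> S" "0 \<le> \<alpha> y" "\<alpha> y \<le> 1" and t: "0 < t" "t < 1" "t < t0"
  shows "ln (gauss_smooth_density M t x) \<le> K2 t + (\<alpha> y - 1) * ln t + ((x - y)/t)\<^sup>2 / 2"
proof -
  define a where "a = 2 + 2 * sqrt (2 * - ln t)"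
  define d where "d = \<bar>x - y\<bar> / t"
  have a: "2 \<le> a" using t by (simp add: a_def)
  have d: "0 \<le> d" using t by (simp add: d_def)
  have tp: "0 < t powr \<alpha> y" using t by simp
  have Mp: "0 < Mx" using Mx_ge(1) by simp
  have pp: "0 < gauss_smooth_density M t x" using p_pos t by simp
  have "ln (gauss_smooth_density M t x) \<le> ln (Mx * t powr \<alpha> y / (t * sqrt (2*pi)) * (a + 2 * d))"
    using p_upper[OF y t(1,2), where x=x] pp tp Mp a d t
    by (subst ln_le_cancel_iff) (auto simp: a_def d_def intro!: mult_pos_pos add_pos_nonneg)
  also have "\<dots> = ln Mx + \<alpha> y * ln t - ln t - ln (sqrt (2*pi)) + ln (a + 2 * d)"
    using tp Mp a d t by (simp add: ln_mult ln_div ln_powr)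
  finally have X0: "ln (gauss_smooth_density M t x) \<le> ln Mx + \<alpha> y * ln t - ln t - ln (sqrt (2*pi)) + ln (a + 2 * d)" .
  have X1: "ln (a + 2 * d) \<le> ln a + (1 + d\<^sup>2)/2"
  proof -
    have "2 * d \<le> a * d" using a d by (intro mult_right_mono) auto
    then have "a + 2 * d \<le> a * (1 + d)" by (simp add: algebra_simps)
    then have "ln (a + 2 * d) \<le> ln (a * (1 + d))" using a d by (subst ln_le_cancel_iff) auto
    also have "\<dots> = ln a + ln (1 + d)" using a d by (simp add: ln_mult)
    also have "ln (1 + d) \<le> d" using d by (intro ln_add_one_self_le_self)
    also have "d \<le> (1 + d\<^sup>2)/2" using sum_squares_ge_zero[of "d - 1" 0]
      by (simp add: power2_eq_square algebra_simps)
    finally show ?thesis by simp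
  qed
  have dsq: "d\<^sup>2 = ((x - y)/t)\<^sup>2" by (simp add: d_def power_divide)
  have X: "ln (gauss_smooth_density M t x) \<le> ln Mx + \<alpha> y * ln t - ln t - ln (sqrt (2 * pi)) +
    (ln a + (1 + ((x - y) / t)\<^sup>2) / 2)" using X0 X1 unfolding dsq by linarith
  have "ln (Mx / sqrt (2*pi)) = ln Mx - ln (sqrt (2*pi))" using Mp by (simp add: ln_div)
  moreover have "(1 + ((x - y) / t)\<^sup>2) / 2 = 1/2 + ((x - y) / t)\<^sup>2 / 2" by simp
  moreover have "(\<alpha> y - 1) * ln t = \<alpha> y * ln t - ln t" by (simp add: algebra_simps)
  ultimately show ?thesis using X unfolding K2_def a_def by linarith
qed

lemma p_meas[measurable]: "gauss_smooth_density M t \<in> borel_measurable borel"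
proof -
  have "(\<lambda>x. \<integral>y. normal_density 0 t (x - y) \<partial>M) \<in> borel_measurable borel"
    by (rule sigma_finite_measure.borel_measurable_lebesgue_integral[OF prob_space_imp_sigma_finite[OF P]])
       measurable
  then show ?thesis unfolding gauss_smooth_density_def[abs_def] .
qed

lemma int_const: "(\<integral>y. (k::real) \<partial>M) = k"
  using prob_space.prob_space[OF P] by simp

lemma H_bounds:
  assumes t: "0 < t" "t < t0" "t < 1"
  shows "integrable lborel (\<lambda>x. gauss_smooth_density M t x * ln (gauss_smooth_density M t x))"
    and "K1 - 1 + ((\<integral>y. \<alpha> y \<partial>M) - 1) * ln t \<le>
          (\<integral>x. gauss_smooth_density M t x * ln (gauss_smooth_density M t x) \<partial>lborel)"
    and "(\<integral>x. gauss_smooth_density M t x * ln (gauss_smooth_density M t x) \<partial>lborel)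
          \<le> K2 t + 1/2 + ((\<integral>y. \<alpha> y \<partial>M) - 1) * ln t"
proof -
  define p where "p = gauss_smooth_density M t"
  define G where "G y x = normal_density 0 t (x - y) * ln (p x)" for y x
  define B where "B = \<bar>K1\<bar> + \<bar>K2 t\<bar> + \<bar>ln t\<bar>"
  interpret PS: pair_sigma_finite M lborel
    by (intro pair_sigma_finite.intro prob_space_imp_sigma_finite[OF P] sigma_finite_lborel)
  have pm[measurable]: "p \<in> borel_measurable borel" unfolding p_def by (rule p_meas)
  have Gm[measurable]: "(\<lambda>(y, x). G y x) \<in> borel_measurable (M \<Otimes>\<^sub>M lborel)"
    unfolding G_def by measurable
  have lnb: "\<bar>ln (p x)\<bar> \<le> B + ((x - y)/t)\<^sup>2"
    and lnl: "K1 + (\<alpha> y - 1) * ln t + (-1) * ((x - y)/t)\<^sup>2 \<le> ln (p x)"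
    and lnu: "ln (p x) \<le> K2 t + (\<alpha> y - 1) * ln t + (1/2) * ((x - y)/t)\<^sup>2"
    if y: "y \<in> S \<and> 0 \<le> \<alpha> y \<and> \<alpha> y \<le> 1" for x y
  proof -
    have l: "K1 + (\<alpha> y - 1) * ln t - ((x - y)/t)\<^sup>2 \<le> ln (p x)"
      unfolding p_def using y t by (intro log_lower) auto
    have u: "ln (p x) \<le> K2 t + (\<alpha> y - 1) * ln t + ((x - y)/t)\<^sup>2 / 2"
      unfolding p_def using y t by (intro log_upper) auto
    have a1: "\<bar>(\<alpha> y - 1) * ln t\<bar> \<le> \<bar>ln t\<bar>"
      using y by (auto simp: abs_mult intro!: mult_left_le_one_le)
    have q0: "0 \<le> ((x - y)/t)\<^sup>2" by simp
    have a2: "- \<bar>ln t\<bar> \<le> (\<alpha> y - 1) * ln t" "(\<alpha> y - 1) * ln t \<le> \<bar>ln t\<bar>"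
      using a1 by (simp_all add: abs_le_iff)
    show "\<bar>ln (p x)\<bar> \<le> B + ((x - y)/t)\<^sup>2"
      unfolding B_def using l u a2 q0 abs_ge_self[of K1] abs_ge_minus_self[of K1]
        abs_ge_self[of "K2 t"] abs_ge_minus_self[of "K2 t"]
      by (intro abs_leI) linarith+
    show "K1 + (\<alpha> y - 1) * ln t + (-1) * ((x - y)/t)\<^sup>2 \<le> ln (p x)" using l by simp
    show "ln (p x) \<le> K2 t + (\<alpha> y - 1) * ln t + (1/2) * ((x - y)/t)\<^sup>2" using u by simp
  qed
  have Gb: "norm (G y x) \<le> normal_density y t x * (B + 1 * ((x - y)/t)\<^sup>2)"
    if y: "y \<in> S \<and> 0 \<le> \<alpha> y \<and> \<alpha> y \<le> 1" for x y
    unfolding G_def nd_shift using lnb[OF y, of x]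
    by (simp add: abs_mult mult_left_mono)
  have integ2: "integrable lborel (G y)" if y: "y \<in> S \<and> 0 \<le> \<alpha> y \<and> \<alpha> y \<le> 1" for y
  proof (rule Bochner_Integration.integrable_bound[OF nd_quad(1)[OF t(1), of y B 1]])
    show "G y \<in> borel_measurable lborel" unfolding G_def by measurable
    show "AE x in lborel. norm (G y x) \<le> norm (normal_density y t x * (B + 1 * ((x - y)/t)\<^sup>2))"
      using Gb[OF y] by (intro AE_I2) (smt (verit) real_norm_def)
  qed
  have integ1: "integrable M (\<lambda>y. \<integral>x. norm (G y x) \<partial>lborel)"
  proof (rule finite_measure.integrable_const_bound[OF FM, where B="B + 1"])
    show "AE y in M. norm (\<integral>x. norm (G y x) \<partial>lborel) \<le> B + 1"
      using AE_good
    proof eventually_elim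
      case (elim y)
      have "(\<integral>x. norm (G y x) \<partial>lborel) \<le> (\<integral>x. normal_density y t x * (B + 1 * ((x - y)/t)\<^sup>2) \<partial>lborel)"
        by (intro integral_mono integrable_norm integ2 elim nd_quad(1)[OF t(1)] Gb)
      also have "\<dots> = B + 1" by (rule nd_quad(2)[OF t(1)])
      finally show ?case by simp
    qed
    show "(\<lambda>y. \<integral>x. norm (G y x) \<partial>lborel) \<in> borel_measurable M"
      by (rule lborel.borel_measurable_lebesgue_integral) measurable
  qed
  have IG: "integrable (M \<Otimes>\<^sub>M lborel) (\<lambda>(y, x). G y x)"
    by (rule PS.Fubini_integrable) (use Gm integ1 AE_good integ2 in \<open>auto elim: AE_mp\<close>)
  have inner: "(\<integral>y. G y x \<partial>M) = p x * ln (p x)" for x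
    unfolding G_def p_def gauss_smooth_density_def by simp
  show "integrable lborel (\<lambda>x. gauss_smooth_density M t x * ln (gauss_smooth_density M t x))"
    using PS.integrable_snd[OF IG] unfolding inner p_def .
  have Fub: "(\<integral>x. p x * ln (p x) \<partial>lborel) = (\<integral>y. (\<integral>x. G y x \<partial>lborel) \<partial>M)"
    using PS.Fubini_integral[OF IG] unfolding inner .
  have gi: "integrable M (\<lambda>y. \<integral>x. G y x \<partial>lborel)"
    using PS.integrable_fst[OF IG] .
  have gl: "K1 + (\<alpha> y - 1) * ln t + (-1) \<le> (\<integral>x. G y x \<partial>lborel)"
    and gu: "(\<integral>x. G y x \<partial>lborel) \<le> K2 t + (\<alpha> y - 1) * ln t + 1/2"
    if y: "y \<in> S \<and> 0 \<le> \<alpha> y \<and> \<alpha> y \<le> 1" for y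
  proof -
    have "K1 + (\<alpha> y - 1) * ln t + (-1) =
      (\<integral>x. normal_density y t x * ((K1 + (\<alpha> y - 1) * ln t) + (-1) * ((x - y)/t)\<^sup>2) \<partial>lborel)"
      by (rule nd_quad(2)[OF t(1), symmetric])
    also have "\<dots> \<le> (\<integral>x. G y x \<partial>lborel)"
      unfolding G_def nd_shift
      by (intro integral_mono nd_quad(1)[OF t(1)] integ2[OF y, unfolded G_def nd_shift]
          mult_left_mono lnl[OF y]) auto
    finally show "K1 + (\<alpha> y - 1) * ln t + (-1) \<le> (\<integral>x. G y x \<partial>lborel)" .
    have "(\<integral>x. G y x \<partial>lborel) \<le>
      (\<integral>x. normal_density y t x * ((K2 t + (\<alpha> y - 1) * ln t) + (1/2) * ((x - y)/t)\<^sup>2) \<partial>lborel)"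
      unfolding G_def nd_shift
      by (intro integral_mono nd_quad(1)[OF t(1)] integ2[OF y, unfolded G_def nd_shift]
          mult_left_mono lnu[OF y]) auto
    also have "\<dots> = K2 t + (\<alpha> y - 1) * ln t + 1/2" by (rule nd_quad(2)[OF t(1)])
    finally show "(\<integral>x. G y x \<partial>lborel) \<le> K2 t + (\<alpha> y - 1) * ln t + 1/2" .
  qed
  have ia: "integrable M \<alpha>" by (rule alpha_integrable)
  have lin: "(\<integral>y. k + (\<alpha> y - 1) * ln t \<partial>M) = k + ((\<integral>y. \<alpha> y \<partial>M) - 1) * ln t" for k
  proof -
    have "(\<lambda>y. k + (\<alpha> y - 1) * ln t) = (\<lambda>y. (k - ln t) + \<alpha> y * ln t)"
      by (auto simp: fun_eq_iff algebra_simps)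
    then have "(\<integral>y. k + (\<alpha> y - 1) * ln t \<partial>M) = (\<integral>y. (k - ln t) + \<alpha> y * ln t \<partial>M)" by simp
    also have "\<dots> = (k - ln t) + (\<integral>y. \<alpha> y \<partial>M) * ln t"
      using ia prob_space.prob_space[OF P] by (simp add: int_const)
    finally show ?thesis by (simp add: algebra_simps)
  qed
  have "K1 - 1 + ((\<integral>y. \<alpha> y \<partial>M) - 1) * ln t = (\<integral>y. (K1 - 1) + (\<alpha> y - 1) * ln t \<partial>M)"
    by (rule lin[symmetric])
  also have "\<dots> \<le> (\<integral>y. (\<integral>x. G y x \<partial>lborel) \<partial>M)"
  proof (intro integral_mono_AE gi)
    show "integrable M (\<lambda>y. (K1 - 1) + (\<alpha> y - 1) * ln t)"
      using ia by (intro Bochner_Integration.integrable_add integrable_mult_left Bochner_Integration.integrable_diff) auto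
    show "AE y in M. (K1 - 1) + (\<alpha> y - 1) * ln t \<le> (\<integral>x. G y x \<partial>lborel)"
      using AE_good
    proof eventually_elim
      case (elim y) from gl[OF elim] show ?case by simp
    qed
  qed
  finally show "K1 - 1 + ((\<integral>y. \<alpha> y \<partial>M) - 1) * ln t \<le>
          (\<integral>x. gauss_smooth_density M t x * ln (gauss_smooth_density M t x) \<partial>lborel)"
    using Fub by (simp add: p_def)
  have "(\<integral>y. (\<integral>x. G y x \<partial>lborel) \<partial>M) \<le> (\<integral>y. (K2 t + 1/2) + (\<alpha> y - 1) * ln t \<partial>M)"
  proof (intro integral_mono_AE gi)
    show "integrable M (\<lambda>y. (K2 t + 1/2) + (\<alpha> y - 1) * ln t)"
      using ia by (intro Bochner_Integration.integrable_add integrable_mult_left Bochner_Integration.integrable_diff) auto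
    show "AE y in M. (\<integral>x. G y x \<partial>lborel) \<le> (K2 t + 1/2) + (\<alpha> y - 1) * ln t"
      using AE_good
    proof eventually_elim
      case (elim y) from gu[OF elim] show ?case by simp
    qed
  qed
  also have "\<dots> = K2 t + 1/2 + ((\<integral>y. \<alpha> y \<partial>M) - 1) * ln t" by (rule lin)
  finally show "(\<integral>x. gauss_smooth_density M t x * ln (gauss_smooth_density M t x) \<partial>lborel)
          \<le> K2 t + 1/2 + ((\<integral>y. \<alpha> y \<partial>M) - 1) * ln t"
    using Fub by (simp add: p_def)
qed

lemma final: "delta_c M = ereal (\<integral>y. \<alpha> y \<partial>M)"
proof -
  define I where "I = (\<integral>y. \<alpha> y \<partial>M)"
  define h where "h t = (\<integral>x. gauss_smooth_density M t x * ln (gauss_smooth_density M t x) \<partial>lborel)" for t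
  define g where "g t = h t / (- ln t)" for t
  have EV: "eventually (\<lambda>t. 0 < t \<and> t < t0 \<and> t < 1) (at_right (0::real))"
  proof -
    have "eventually (\<lambda>t. t < min t0 1) (at_right (0::real))"
      using t0p by (intro order_tendstoD(2)[OF tendsto_ident_at]) auto
    moreover have "eventually (\<lambda>t. 0 < t) (at_right (0::real))" by (rule eventually_at_right_less)
    ultimately show ?thesis by eventually_elim auto
  qed
  have eq: "eventually (\<lambda>t. diff_entropy (gauss_smooth_density M t) / ereal \<bar>ln t\<bar> = ereal (g t)) (at_right 0)"
    using EV
  proof eventually_elim
    case (elim t)
    then have L: "0 < - ln t" by simp
    have "diff_entropy (gauss_smooth_density M t) = ereal (h t)"
      unfolding h_def by (rule de_int) (rule H_bounds(1), use elim in auto)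
    moreover have "\<bar>ln t\<bar> = - ln t" using L by simp
    ultimately show ?case using L by (simp add: g_def ereal_divide)
  qed
  have lo: "eventually (\<lambda>t. (1 - I) + (K1 - 1) / (- ln t) \<le> g t) (at_right 0)"
    using EV
  proof eventually_elim
    case (elim t)
    then have L: "0 < - ln t" by simp
    have "K1 - 1 + (I - 1) * ln t \<le> h t"
      unfolding h_def I_def by (rule H_bounds(2)) (use elim in auto)
    then have "(K1 - 1 + (I - 1) * ln t) / (- ln t) \<le> h t / (- ln t)"
      using L by (intro divide_right_mono) auto
    also have "(K1 - 1 + (I - 1) * ln t) / (- ln t) = (1 - I) + (K1 - 1) / (- ln t)"
      using L by (simp add: field_simps)
    finally show ?case by (simp add: g_def)
  qed
  have hi: "eventually (\<lambda>t. g t \<le> (1 - I) + (ln (Mx / sqrt (2*pi)) + 1 + ln (2 + 2 * sqrt (2 * - ln t))) / (- ln t)) (at_right 0)"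
    using EV
  proof eventually_elim
    case (elim t)
    then have L: "0 < - ln t" by simp
    have "h t \<le> K2 t + 1/2 + (I - 1) * ln t"
      unfolding h_def I_def by (rule H_bounds(3)) (use elim in auto)
    then have "h t / (- ln t) \<le> (K2 t + 1/2 + (I - 1) * ln t) / (- ln t)"
      using L by (intro divide_right_mono) auto
    also have "(K2 t + 1/2 + (I - 1) * ln t) / (- ln t) =
        (1 - I) + (ln (Mx / sqrt (2*pi)) + 1 + ln (2 + 2 * sqrt (2 * - ln t))) / (- ln t)"
      using L by (simp add: field_simps K2_def)
    finally show ?case by (simp add: g_def)
  qed
  have "(g \<longlongrightarrow> 1 - I) (at_right 0)"
  proof (rule tendsto_sandwich[OF lo hi])
    show "((\<lambda>t. (1 - I) + (K1 - 1) / (- ln t)) \<longlongrightarrow> 1 - I) (at_right 0)"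
      using tendsto_add[OF tendsto_const lim1[of "K1 - 1"]] by simp
    show "((\<lambda>t. (1 - I) + (ln (Mx / sqrt (2*pi)) + 1 + ln (2 + 2 * sqrt (2 * - ln t))) / (- ln t)) \<longlongrightarrow> 1 - I) (at_right 0)"
      using tendsto_add[OF tendsto_const lim2[of "ln (Mx / sqrt (2*pi)) + 1"]] by (simp add: add.assoc)
  qed
  then have "((\<lambda>t. ereal (g t)) \<longlongrightarrow> ereal (1 - I)) (at_right 0)" by (rule tendsto_ereal)
  then have "((\<lambda>t. diff_entropy (gauss_smooth_density M t) / ereal \<bar>ln t\<bar>) \<longlongrightarrow> ereal (1 - I)) (at_right 0)"
    using tendsto_cong[OF eq] by simp
  then have "Liminf (at_right 0) (\<lambda>t. diff_entropy (gauss_smooth_density M t) / ereal \<bar>ln t\<bar>) = ereal (1 - I)"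
    by (intro lim_imp_Liminf) auto
  then show ?thesis unfolding delta_c_def I_def by (simp add: one_ereal_def)
qed

end

theorem corollary3p2:
  fixes \<mu> :: "real measure" and \<alpha> :: "real \<Rightarrow> real" and C c t0 :: real
  assumes "prob_space \<mu>" and "sets \<mu> = sets borel"
    and "\<alpha> \<in> borel_measurable \<mu>"
    and "C > 0" and "c > 0" and "t0 > 0"
    and "\<And>x t. x \<in> measure_support \<mu> \<Longrightarrow> 0 < t \<Longrightarrow> t < t0 \<Longrightarrow>
           c * t powr \<alpha> x \<le> measure \<mu> {x - t/2 .. x + t/2}
         \<and> measure \<mu> {x - t/2 .. x + t/2} \<le> C * t powr \<alpha> x"
  shows "integrable \<mu> \<alpha> \<and> delta_c \<mu> = ereal (\<integral>x. \<alpha> x \<partial>\<mu>)"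
proof -
  interpret D: dimreg \<mu> \<alpha> C c t0
    by (rule dimreg.intro) (fact assms)+
  show ?thesis using D.alpha_integrable D.final by simp
qed

end
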